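(* Let $T_{ij,k\ell}\ge0$ satisfy $\sum_{i,j\ge0}T_{ij,k\ell}=1$ for all $k,\ell\in\mathbb N_0$, and let $\mathcal R(p)_i=\sum_{j,k,\ell\ge0}T_{ij,k\ell}\,p_kp_\ell$ on $\mathcal M_1^+$. Assume $\mathcal R$ has a nonempty, convex, weak-$*$ closed invariant set $M\subset\mathcal M_1^+$ (i.e. $\mathcal R(M)\subset M$) which is tight, i.e. for every $\varepsilon>0$ there is $m\in\mathbb N_0$ with $\sum_{k\ge m}p_k<\varepsilon$ for all $p\in M$. Then $\mathcal R$ has a fixed point in $M$.
   Context: $\mathcal M_1^+$ is the set of probability measures on $\mathbb N_0$, identified with nonnegative sequences summing to $1$. The weak-$*$ topology on $\mathcal M_1^+$ is that of pointwise (vague) convergence $p^{(n)}_k\to p_k$ for every $k$. *)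

theory Defs
  imports "HOL-Analysis.Analysis"
begin

text \<open>Probability measures on the nonnegative integers, as nonnegative
sequences summing to 1. The weak-* topology is the pointwise (product)
topology on nat => real, restricted to this set.\<close>
definition M1plus :: "(nat \<Rightarrow> real) set" where
  "M1plus = {p. (\<forall>k. 0 \<le> p k) \<and> (p has_sum 1) UNIV}"

definition Rop :: "(nat \<Rightarrow> nat \<Rightarrow> nat \<Rightarrow> nat \<Rightarrow> real) \<Rightarrow> (nat \<Rightarrow> real) \<Rightarrow> nat \<Rightarrow> real" where
  "Rop T p i = (\<Sum>\<^sub>\<infinity>(j,k,l)\<in>UNIV. T i j k l * p k * p l)"

end

theory Submission
  imports Defs "HOL-Homology.Homology"
begin


definition sqn :: "nat \<Rightarrow> (nat \<Rightarrow> real) \<Rightarrow> real" where "sqn n x = (\<Sum>i\<le>n. (x i)^2)"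
definition Dn :: "nat \<Rightarrow> (nat \<Rightarrow> real) set" where "Dn n = {x. (\<forall>i>n. x i = 0) \<and> sqn n x \<le> 1}"
definition Sn :: "nat \<Rightarrow> (nat \<Rightarrow> real) set" where "Sn n = {x. sqn n x = 1 \<and> (\<forall>i>n. x i = 0)}"

lemma not_contractible_Sn: "\<not> contractible (Sn n)"
proof -
  have "nsphere n = top_of_set (Sn n)"
    unfolding nsphere Sn_def sqn_def euclidean_product_topology by simp
  then show ?thesis using non_contractible_space_nsphere[of n] by simp
qed

lemma homot_intro:
  assumes "continuous_on ({0..1::real} \<times> S) h" "h ` ({0..1} \<times> S) \<subseteq> T"
    "\<And>x. x\<in>S \<Longrightarrow> h(0,x) = f x" "\<And>x. x\<in>S \<Longrightarrow> h(1,x) = g x"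
  shows "homotopic_with_canon (\<lambda>x. True) S T f g"
proof -
  have "homotopic_with_canon (\<lambda>x. True) S T (\<lambda>x. h(0,x)) (\<lambda>x. h(1,x))"
    unfolding homotopic_with_def using assms(1,2) by (intro exI[of _ h]) auto
  then show ?thesis by (rule homotopic_with_eq) (use assms in auto)
qed

lemma cont_coord: "continuous_on A g \<Longrightarrow> continuous_on A (\<lambda>z. g z i)"
  by (rule continuous_on_product_then_coordinatewise)

lemma cont_sqn: "continuous_on A g \<Longrightarrow> continuous_on A (\<lambda>z. sqn n (g z))"
proof -
  assume a: "continuous_on A g"
  have "continuous_on A (\<lambda>z. (g z i)^2)" for i using cont_coord[OF a, of i] by (rule continuous_on_power)
  then show ?thesis unfolding sqn_def by (intro continuous_on_sum) auto
qed

lemma sqn_scale: "sqn n (\<lambda>i. c * x i) = c^2 * sqn n x"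
  unfolding sqn_def by (simp add: power_mult_distrib sum_distrib_left)

lemma sqn_nonneg: "sqn n x \<ge> 0" unfolding sqn_def by (simp add: sum_nonneg)

lemma brouwer_Dn:
  assumes cf: "continuous_on (Dn n) f" and fD: "f ` Dn n \<subseteq> Dn n"
  shows "\<exists>x\<in>Dn n. f x = x"
proof (rule ccontr)
  assume nofix: "\<not> ?thesis"
  define N where "N = (\<lambda>v::nat\<Rightarrow>real. (\<lambda>i. v i / sqrt (sqn n v)))"
  define G where "G = (\<lambda>y. N (\<lambda>i. y i - f y i))"
  have SD: "Sn n \<subseteq> Dn n" unfolding Sn_def Dn_def by auto
  have sqN: "sqn n (N v) = 1" if "sqn n v \<noteq> 0" for v
  proof -
    have "sqn n (N v) = (1 / sqrt (sqn n v))^2 * sqn n v"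
      unfolding N_def using sqn_scale[of n "1 / sqrt (sqn n v)" v] by (simp add: field_simps)
    also have "\<dots> = 1" using that sqn_nonneg[of n v] by (simp add: power_divide)
    finally show ?thesis .
  qed
  have NS: "N v \<in> Sn n" if "sqn n v \<noteq> 0" "\<forall>i>n. v i = 0" for v
    using sqN[OF that(1)] that(2) unfolding Sn_def N_def by auto
  have nz1: "sqn n (\<lambda>i. x i - t * f x i) \<noteq> 0" if x: "x \<in> Sn n" and t: "t \<in> {0..1}" for x t
  proof
    assume "sqn n (\<lambda>i. x i - t * f x i) = 0"
    then have eq: "\<forall>i\<le>n. x i = t * f x i"
      unfolding sqn_def by (subst (asm) sum_nonneg_eq_0_iff) auto
    have fx: "f x \<in> Dn n" using fD SD x by auto
    have "1 = sqn n x" using x unfolding Sn_def by simp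
    also have "\<dots> = sqn n (\<lambda>i. t * f x i)" unfolding sqn_def using eq by simp
    also have "\<dots> = t^2 * sqn n (f x)" by (rule sqn_scale)
    finally have 1: "1 = t^2 * sqn n (f x)" .
    have "sqn n (f x) \<le> 1" using fx unfolding Dn_def by simp
    moreover have "t^2 \<le> 1" using t by (simp add: power_le_one)
    moreover have "0 \<le> sqn n (f x)" by (rule sqn_nonneg)
    moreover have "0 \<le> t^2" by simp
    ultimately have a: "t^2 * sqn n (f x) \<le> 1 * sqn n (f x)" and b: "t^2 * sqn n (f x) \<le> t^2 * 1"
      by (intro mult_right_mono mult_left_mono; simp)+
    have "sqn n (f x) = 1" using a b 1 \<open>sqn n (f x) \<le> 1\<close> by linarith
    moreover have "t^2 = 1" using a b 1 \<open>t^2 \<le> 1\<close> by linarith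
    then have "t = 1" using t by (simp add: power2_eq_1_iff)
    ultimately have "t = 1" "sqn n (f x) = 1" by auto
    then have "f x = x"
    proof (intro ext)
      fix i show "f x i = x i" using eq x fx \<open>t = 1\<close> unfolding Sn_def Dn_def by (cases "i \<le> n") auto
    qed
    then show False using nofix x SD by auto
  qed
  have nz2: "sqn n (\<lambda>i. y i - f y i) \<noteq> 0" if y: "y \<in> Dn n" for y
  proof
    assume "sqn n (\<lambda>i. y i - f y i) = 0"
    then have eq: "\<forall>i\<le>n. y i = f y i"
      unfolding sqn_def by (subst (asm) sum_nonneg_eq_0_iff) auto
    have fy: "f y \<in> Dn n" using fD y by auto
    have "f y = y"
    proof (intro ext)
      fix i show "f y i = y i" using eq y fy unfolding Dn_def by (cases "i \<le> n") auto
    qed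
    then show False using nofix y by auto
  qed
  have h1: "homotopic_with_canon (\<lambda>x. True) (Sn n) (Sn n) id G"
  proof (rule homot_intro[where h="\<lambda>(t,x). N (\<lambda>i. x i - t * f x i)"])
    have cf': "continuous_on ({0..1::real} \<times> Sn n) (\<lambda>z. f (snd z))"
      by (rule continuous_on_compose2[OF cf continuous_on_snd[OF continuous_on_id]]) (use SD in auto)
    define V where "V = (\<lambda>z::real\<times>(nat\<Rightarrow>real). (\<lambda>j. snd z j - fst z * f (snd z) j))"
    have cV: "continuous_on ({0..1::real} \<times> Sn n) V"
    proof -
      have "continuous_on ({0..1::real} \<times> Sn n) (\<lambda>z. snd z j - fst z * f (snd z) j)" for j
        using cont_coord[OF continuous_on_snd[OF continuous_on_id], of _ j] cont_coord[OF cf', of j]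
        by (intro continuous_on_diff continuous_on_mult continuous_on_fst continuous_on_id) auto
      then show ?thesis unfolding V_def by (rule continuous_on_coordinatewise_then_product)
    qed
    have "continuous_on ({0..1::real} \<times> Sn n) (\<lambda>z. N (V z))"
      unfolding N_def
    proof (rule continuous_on_coordinatewise_then_product)
      fix i
      show "continuous_on ({0..1::real} \<times> Sn n) (\<lambda>z. V z i / sqrt (sqn n (V z)))"
        using cont_coord[OF cV, of i] cont_sqn[OF cV, of n]
        by (intro continuous_on_divide continuous_on_real_sqrt) (auto simp: V_def nz1)
    qed
    then show "continuous_on ({0..1::real} \<times> Sn n) (\<lambda>(t,x). N (\<lambda>i. x i - t * f x i))"
      by (simp add: V_def case_prod_unfold)
    show "(\<lambda>(t,x). N (\<lambda>i. x i - t * f x i)) ` ({0..1} \<times> Sn n) \<subseteq> Sn n"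
    proof clarsimp
      fix t x assume "0 \<le> t" "t \<le> (1::real)" "x \<in> Sn n"
      moreover have "f x \<in> Dn n" using fD SD \<open>x \<in> Sn n\<close> by auto
      ultimately show "N (\<lambda>i. x i - t * f x i) \<in> Sn n"
        using nz1 by (intro NS) (auto simp: Sn_def Dn_def)
    qed
    show "(\<lambda>(t,x). N (\<lambda>i. x i - t * f x i)) (0, x) = id x" if "x \<in> Sn n" for x
      using that unfolding N_def Sn_def by auto
    show "(\<lambda>(t,x). N (\<lambda>i. x i - t * f x i)) (1, x) = G x" for x
      unfolding G_def by simp
  qed
  have h2: "homotopic_with_canon (\<lambda>x. True) (Sn n) (Sn n) G (\<lambda>x. G (\<lambda>i. 0))"
  proof (rule homot_intro[where h="\<lambda>(t,x). G (\<lambda>i. (1 - t) * x i)"])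
    have inD: "(\<lambda>i. (1 - t) * x i) \<in> Dn n" if "t \<in> {0..1}" "x \<in> Sn n" for t x
    proof -
      have "sqn n (\<lambda>i. (1 - t) * x i) = (1-t)^2" using that sqn_scale[of n "1-t" x]
        by (simp add: Sn_def)
      also have "\<dots> \<le> 1" using that by (simp add: power_le_one)
      finally show ?thesis using that by (simp add: Dn_def Sn_def)
    qed
    have cW: "continuous_on (Dn n) (\<lambda>y. (\<lambda>j. y j - f y j))"
    proof (rule continuous_on_coordinatewise_then_product)
      fix j show "continuous_on (Dn n) (\<lambda>y. y j - f y j)"
        using cont_coord[OF continuous_on_id, of _ j] cont_coord[OF cf, of j]
        by (intro continuous_on_diff) auto
    qed
    have cG: "continuous_on (Dn n) G"
      unfolding G_def N_def
    proof (rule continuous_on_coordinatewise_then_product)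
      fix i
      show "continuous_on (Dn n) (\<lambda>y. (y i - f y i) / sqrt (sqn n (\<lambda>j. y j - f y j)))"
        using cont_coord[OF cW, of i] cont_sqn[OF cW, of n]
        by (intro continuous_on_divide continuous_on_real_sqrt) (auto simp: nz2)
    qed
    have cU: "continuous_on ({0..1::real} \<times> Sn n) (\<lambda>z. (\<lambda>i. (1 - fst z) * snd z i))"
    proof (rule continuous_on_coordinatewise_then_product)
      fix i show "continuous_on ({0..1::real} \<times> Sn n) (\<lambda>z. (1 - fst z) * snd z i)"
        using cont_coord[OF continuous_on_snd[OF continuous_on_id], of _ i]
        by (intro continuous_on_mult continuous_on_diff continuous_on_const continuous_on_fst continuous_on_id) auto
    qed
    show "continuous_on ({0..1::real} \<times> Sn n) (\<lambda>(t,x). G (\<lambda>i. (1 - t) * x i))"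
      unfolding case_prod_unfold
      by (rule continuous_on_compose2[OF cG cU]) (use inD in auto)
    show "(\<lambda>(t,x). G (\<lambda>i. (1 - t) * x i)) ` ({0..1} \<times> Sn n) \<subseteq> Sn n"
    proof clarsimp
      fix t x assume "0 \<le> t" "t \<le> (1::real)" "x \<in> Sn n"
      then have y: "(\<lambda>i. (1 - t) * x i) \<in> Dn n" using inD by auto
      then have "f (\<lambda>i. (1 - t) * x i) \<in> Dn n" using fD by auto
      then show "G (\<lambda>i. (1 - t) * x i) \<in> Sn n"
        unfolding G_def using nz2[OF y] y by (intro NS) (auto simp: Dn_def)
    qed
  qed auto
  have "homotopic_with_canon (\<lambda>x. True) (Sn n) (Sn n) id (\<lambda>x. G (\<lambda>i. 0))"
    using homotopic_with_trans[OF h1 h2] .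
  then have "contractible (Sn n)" unfolding contractible_def by (rule exI[where x="G (\<lambda>i. 0)"])
  then show False using not_contractible_Sn by blast
qed



definition Kn :: "nat \<Rightarrow> (nat \<Rightarrow> real) set" where
  "Kn n = {x. (\<forall>i. 0 \<le> x i) \<and> (\<forall>i\<ge>n. x i = 0) \<and> (\<Sum>i<n. x i) \<le> 1}"

definition rho :: "nat \<Rightarrow> (nat \<Rightarrow> real) \<Rightarrow> (nat \<Rightarrow> real)" where
  "rho n x = (\<lambda>i. if i < n then max (x i) 0 / max 1 (\<Sum>j<n. max (x j) 0) else 0)"

lemma rho_K: "rho n x \<in> Kn n"
proof -
  let ?s = "\<Sum>j<n. max (x j) 0"
  have "(\<Sum>i<n. rho n x i) = ?s / max 1 ?s"
    unfolding rho_def by (simp add: sum_divide_distrib)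
  also have "\<dots> \<le> 1"
  proof -
    have "0 < max 1 ?s" by (simp add: less_max_iff_disj)
    moreover have "?s \<le> max 1 ?s" by simp
    ultimately show ?thesis by (simp add: divide_le_eq_1)
  qed
  finally show ?thesis unfolding Kn_def rho_def by auto
qed

lemma rho_id:
  assumes x: "x \<in> Kn n" shows "rho n x = x"
proof
  fix i
  have nn: "\<And>j. 0 \<le> x j" and z: "\<And>j. j \<ge> n \<Longrightarrow> x j = 0" and s1: "(\<Sum>j<n. x j) \<le> 1"
    using x unfolding Kn_def by auto
  have "(\<Sum>j<n. max (x j) 0) = (\<Sum>j<n. x j)" by (rule sum.cong) (use nn in \<open>auto simp: max_absorb1\<close>)
  then have m1: "max 1 (\<Sum>j<n. max (x j) 0) = 1" using s1 by (simp add: max_absorb1)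
  show "rho n x i = x i"
  proof (cases "i < n")
    case True
    then show ?thesis unfolding rho_def using m1 nn[of i] by (simp add: max_absorb1)
  next
    case False
    then show ?thesis unfolding rho_def using z[of i] by simp
  qed
qed

lemma rho_cont: "continuous_on A (rho n)"
proof -
  have c: "continuous_on A (\<lambda>x::nat\<Rightarrow>real. x j)" for j
    by (rule continuous_on_subset[OF continuous_on_product_coordinates]) auto
  have m: "continuous_on A (\<lambda>x::nat\<Rightarrow>real. max (x j) 0)" for j
    by (intro continuous_on_max c continuous_on_const)
  have s: "continuous_on A (\<lambda>x::nat\<Rightarrow>real. max 1 (\<Sum>j<n. max (x j) 0))"
    by (intro continuous_on_max continuous_on_const continuous_on_sum m)
  show ?thesis
    unfolding rho_def
  proof (rule continuous_on_coordinatewise_then_product)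
    fix i
    show "continuous_on A (\<lambda>x. if i < n then max (x i) 0 / max 1 (\<Sum>j<n. max (x j) 0) else 0)"
    proof (cases "i < n")
      case True
      have "continuous_on A (\<lambda>x. max (x i) 0 / max 1 (\<Sum>j<n. max (x j) 0))"
        by (intro continuous_on_divide m s) auto
      then show ?thesis using True by simp
    qed simp
  qed
qed

lemma K_sub_D: "Kn n \<subseteq> Dn n"
proof
  fix x assume x: "x \<in> Kn n"
  have le1: "x i \<le> 1" if "i < n" for i
  proof -
    have "x i \<le> (\<Sum>j<n. x j)" using x that unfolding Kn_def
      by (intro member_le_sum) auto
    then show ?thesis using x unfolding Kn_def by simp
  qed
  have "sqn n x = (\<Sum>i<n. (x i)^2)"
  proof -
    have "{..n} = insert n {..<n}" by auto
    moreover have "x n = 0" using x unfolding Kn_def by simp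
    ultimately show ?thesis unfolding sqn_def by simp
  qed
  also have "\<dots> \<le> (\<Sum>i<n. x i)"
  proof (rule sum_mono)
    fix i assume "i \<in> {..<n}"
    then show "(x i)^2 \<le> x i" using le1 x unfolding Kn_def
      by (simp add: power2_eq_square mult_left_le_one_le)
  qed
  also have "\<dots> \<le> 1" using x unfolding Kn_def by simp
  finally show "x \<in> Dn n" using x unfolding Kn_def Dn_def by auto
qed

lemma brouwer_K:
  assumes cg: "continuous_on (Kn n) g" and gK: "g ` Kn n \<subseteq> Kn n"
  shows "\<exists>x\<in>Kn n. g x = x"
proof -
  have "continuous_on (Dn n) (g \<circ> rho n)"
    by (rule continuous_on_compose[OF rho_cont continuous_on_subset[OF cg]]) (auto intro: rho_K)
  moreover have "(g \<circ> rho n) ` Dn n \<subseteq> Dn n"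
  proof
    fix y assume "y \<in> (g \<circ> rho n) ` Dn n"
    then obtain x where "y = g (rho n x)" by auto
    moreover have "rho n x \<in> Kn n" by (rule rho_K)
    ultimately have "y \<in> Kn n" using gK by blast
    then show "y \<in> Dn n" using K_sub_D by blast
  qed
  ultimately have "\<exists>x\<in>Dn n. (g \<circ> rho n) x = x" by (rule brouwer_Dn)
  then obtain x where x: "x \<in> Dn n" "g (rho n x) = x" by auto
  have "rho n x \<in> Kn n" by (rule rho_K)
  then have "g (rho n x) \<in> Kn n" using gK by (simp add: image_subset_iff)
  then have xK: "x \<in> Kn n" using x(2) by simp
  then have "g x = x" using x(2) rho_id[OF xK] by simp
  then show ?thesis using xK by blast
qed



lemma coordc[continuous_intros]: "continuous_on A (\<lambda>p::nat\<Rightarrow>real. p k)"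
  by (rule continuous_on_subset[OF continuous_on_product_coordinates]) auto

lemma pair_has_sum:
  fixes p :: "nat \<Rightarrow> real"
  assumes nn: "\<And>k. 0 \<le> p k" and hs: "(p has_sum 1) UNIV"
  shows "((\<lambda>(k,l). p k * p l) has_sum 1) UNIV"
proof -
  have inner: "((\<lambda>l. p k * p l) has_sum p k) UNIV" for k
    using has_sum_cmult_right[OF hs, of "p k"] by simp
  have summ: "(\<lambda>(k,l). p k * p l) summable_on Sigma UNIV (\<lambda>_. UNIV)"
    by (rule summable_on_SigmaI[where g=p]) (use inner hs nn in \<open>auto simp: has_sum_imp_summable\<close>)
  then obtain S where S: "((\<lambda>(k,l). p k * p l) has_sum S) (Sigma UNIV (\<lambda>_. UNIV))"
    by (auto simp: summable_on_def)
  have "(p has_sum S) UNIV" by (rule has_sum_SigmaD[OF S]) (use inner in auto)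
  then have "S = 1" using hs has_sum_unique by blast
  then show ?thesis using S by simp
qed

lemma split_sum:
  fixes f :: "'a \<Rightarrow> real"
  assumes "(f has_sum S) UNIV"
  shows "infsum f (-B) = S - infsum f B"
proof -
  have s: "f summable_on UNIV" using assms has_sum_imp_summable by blast
  have "B \<union> -B = UNIV" by auto
  then have "S = infsum f (B \<union> -B)" using infsumI[OF assms] by simp
  also have "\<dots> = infsum f B + infsum f (-B)"
    by (rule infsum_Un_disjoint) (auto intro: summable_on_subset_banach[OF s])
  finally show ?thesis by simp
qed

lemma tail_sum:
  fixes p :: "nat \<Rightarrow> real"
  assumes hs: "(p has_sum 1) UNIV"
  shows "(\<Sum>k<m. p k) = 1 - infsum p {m..}"
proof -
  have "infsum p (-{..<m}) = 1 - infsum p {..<m}" by (rule split_sum[OF hs])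
  moreover have "-{..<m} = {m..}" by auto
  ultimately show ?thesis by simp
qed

context
  fixes T :: "nat \<Rightarrow> nat \<Rightarrow> nat \<Rightarrow> nat \<Rightarrow> real"
  assumes T_nonneg: "\<And>i j k l. 0 \<le> T i j k l"
    and T_sum: "\<And>k l. ((\<lambda>(i,j). T i j k l) has_sum 1) UNIV"
begin

lemma T_row:
  shows "(\<lambda>j. T i j k l) summable_on UNIV" "(\<Sum>\<^sub>\<infinity>j. T i j k l) \<le> 1"
    "0 \<le> (\<Sum>\<^sub>\<infinity>j. T i j k l)"
proof -
  have s: "(\<lambda>(i,j). T i j k l) summable_on UNIV" using T_sum has_sum_imp_summable by blast
  have s2: "(\<lambda>(i,j). T i j k l) summable_on (Pair i ` UNIV)"
    by (rule summable_on_subset_banach[OF s]) auto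
  have eq: "((\<lambda>(i,j). T i j k l) \<circ> Pair i) = (\<lambda>j. T i j k l)" by auto
  show s3: "(\<lambda>j. T i j k l) summable_on UNIV"
    using s2 summable_on_reindex[of "Pair i" UNIV "\<lambda>(i,j). T i j k l"] eq by (simp add: inj_def)
  have "(\<Sum>\<^sub>\<infinity>j. T i j k l) = infsum (\<lambda>(i,j). T i j k l) (Pair i ` UNIV)"
    using infsum_reindex[of "Pair i" UNIV "\<lambda>(i,j). T i j k l"] eq by (simp add: inj_def)
  also have "\<dots> \<le> infsum (\<lambda>(i,j). T i j k l) UNIV"
    by (rule infsum_mono_neutral[OF s2 s]) (auto simp: T_nonneg)
  also have "\<dots> = 1" using T_sum infsumI by blast
  finally show "(\<Sum>\<^sub>\<infinity>j. T i j k l) \<le> 1" .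
  show "0 \<le> (\<Sum>\<^sub>\<infinity>j. T i j k l)" by (rule infsum_nonneg) (simp add: T_nonneg)
qed

lemma Rop_pairs:
  fixes p :: "nat \<Rightarrow> real"
  assumes nn: "\<And>k. 0 \<le> p k" and hs: "(p has_sum 1) UNIV"
  shows "((\<lambda>(k,l). (\<Sum>\<^sub>\<infinity>j. T i j k l) * p k * p l) has_sum Rop T p i) UNIV"
proof -
  define a where "a k l = (\<Sum>\<^sub>\<infinity>j. T i j k l)" for k l
  define G where "G = (\<lambda>((k::nat,l::nat),j::nat). T i j k l * p k * p l)"
  have inner: "((\<lambda>j. G (kl, j)) has_sum (case kl of (k,l) \<Rightarrow> a k l * p k * p l)) UNIV" for kl
  proof (cases kl)
    case (Pair k l)
    have "((\<lambda>j. T i j k l) has_sum a k l) UNIV"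
      unfolding a_def using T_row(1) by (rule has_sum_infsum)
    then have "((\<lambda>j. T i j k l * p k * p l) has_sum a k l * p k * p l) UNIV"
      by (intro has_sum_cmult_left)
    then show ?thesis by (simp add: Pair G_def)
  qed
  have pairs: "((\<lambda>(k,l). p k * p l) has_sum 1) UNIV" by (rule pair_has_sum[OF nn hs])
  have gsum: "(\<lambda>(k,l). a k l * p k * p l) summable_on UNIV"
  proof (rule summable_on_comparison_test[OF has_sum_imp_summable[OF pairs]])
    fix x :: "nat \<times> nat"
    obtain k l where x: "x = (k,l)" by fastforce
    have "a k l \<le> 1" "0 \<le> a k l" unfolding a_def using T_row by auto
    then show "(case x of (k,l) \<Rightarrow> a k l * p k * p l) \<le> (case x of (k,l) \<Rightarrow> p k * p l)"
      "0 \<le> (case x of (k,l) \<Rightarrow> a k l * p k * p l)"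
      using nn[of k] nn[of l] by (auto simp: x mult_left_le_one_le mult.assoc)
  qed
  have Gs: "G summable_on Sigma UNIV (\<lambda>_. UNIV)"
    by (rule summable_on_SigmaI[OF inner]) (use gsum in \<open>auto simp: G_def T_nonneg nn\<close>)
  then have Gh: "(G has_sum infsum G UNIV) UNIV" by (simp add: has_sum_infsum)
  have "((\<lambda>(k,l). a k l * p k * p l) has_sum infsum G UNIV) UNIV"
    by (rule has_sum_SigmaD[OF _ inner]) (use Gh in simp)
  moreover have "infsum G UNIV = Rop T p i"
  proof -
    have "(G has_sum infsum G UNIV) (UNIV \<times> UNIV)" using Gh by simp
    then have "((\<lambda>(x,y). G (y,x)) has_sum infsum G UNIV) (UNIV \<times> UNIV)"
      by (subst (asm) has_sum_swap)
    moreover have "(\<lambda>(x,y). G (y,x)) = (\<lambda>(j,k,l). T i j k l * p k * p l)"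
      by (auto simp: G_def fun_eq_iff)
    ultimately have "((\<lambda>(j,k,l). T i j k l * p k * p l) has_sum infsum G UNIV) UNIV" by simp
    then show ?thesis unfolding Rop_def by (simp add: infsumI)
  qed
  ultimately show ?thesis by (simp add: a_def)
qed


lemma Rop_tail:
  fixes p :: "nat \<Rightarrow> real"
  assumes nn: "\<And>k. 0 \<le> p k" and hs: "(p has_sum 1) UNIV"
  shows "\<bar>Rop T p i - (\<Sum>x\<in>{..<m}\<times>{..<m}. case x of (k,l) \<Rightarrow> (\<Sum>\<^sub>\<infinity>j. T i j k l) * p k * p l)\<bar>
          \<le> 2 * infsum p {m..}"
proof -
  define g where "g = (\<lambda>(k,l). (\<Sum>\<^sub>\<infinity>j. T i j k l) * p k * p l)"
  define pr where "pr = (\<lambda>(k::nat,l::nat). p k * p l)"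
  define B where "B = {..<m}\<times>{..<m}"
  have gh: "(g has_sum Rop T p i) UNIV" unfolding g_def by (rule Rop_pairs[OF nn hs])
  have ph: "(pr has_sum 1) UNIV" unfolding pr_def by (rule pair_has_sum[OF nn hs])
  have gle: "g x \<le> pr x" "0 \<le> g x" for x
  proof -
    obtain k l where x: "x = (k,l)" by fastforce
    have "(\<Sum>\<^sub>\<infinity>j. T i j k l) \<le> 1" "0 \<le> (\<Sum>\<^sub>\<infinity>j. T i j k l)" using T_row by auto
    then show "g x \<le> pr x" "0 \<le> g x"
      using nn[of k] nn[of l] by (auto simp: x g_def pr_def mult_left_le_one_le mult.assoc)
  qed
  have fin: "finite B" unfolding B_def by simp
  have e1: "infsum g (-B) = Rop T p i - sum g B" using split_sum[OF gh, of B] fin by simp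
  have e2: "infsum pr (-B) = 1 - sum pr B" using split_sum[OF ph, of B] fin by simp
  have le: "infsum g (-B) \<le> infsum pr (-B)"
    by (rule infsum_mono)
       (auto intro: summable_on_subset_banach[OF has_sum_imp_summable[OF gh]]
                    summable_on_subset_banach[OF has_sum_imp_summable[OF ph]] gle)
  have ge: "0 \<le> infsum g (-B)" by (rule infsum_nonneg) (rule gle)
  have "sum pr B = (\<Sum>k<m. p k) * (\<Sum>l<m. p l)"
    unfolding B_def pr_def sum_product sum.cartesian_product ..
  also have "\<dots> = (1 - infsum p {m..})^2" using tail_sum[OF hs, of m] by (simp add: power2_eq_square)
  finally have "1 - sum pr B = 2 * infsum p {m..} - (infsum p {m..})^2" by (simp add: power2_eq_square algebra_simps)
  then have "infsum g (-B) \<le> 2 * infsum p {m..}" using le e2 by (smt (verit) zero_le_power2)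
  then show ?thesis using e1 ge unfolding B_def g_def by simp
qed

lemma Rop_cont:
  assumes sub: "M \<subseteq> M1plus"
    and tight: "\<And>\<epsilon>. \<epsilon> > 0 \<Longrightarrow> \<exists>m. \<forall>p\<in>M. (\<Sum>\<^sub>\<infinity>k\<in>{m..}. p k) < \<epsilon>"
  shows "continuous_on M (Rop T)"
proof (rule continuous_on_coordinatewise_then_product)
  fix i
  define f where "f = (\<lambda>m (p::nat\<Rightarrow>real). (\<Sum>x\<in>{..<m}\<times>{..<m}. case x of (k,l) \<Rightarrow> (\<Sum>\<^sub>\<infinity>j. T i j k l) * p k * p l))"
  have pM: "\<And>k. 0 \<le> p k" "(p has_sum 1) UNIV" if "p \<in> M" for p
    using sub that unfolding M1plus_def by auto
  show "continuous_on M (\<lambda>p. Rop T p i)"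
  proof (rule uniform_limit_theorem[where F=sequentially and f=f])
    show "\<forall>\<^sub>F m in sequentially. continuous_on M (f m)"
      unfolding f_def case_prod_beta
      by (intro always_eventually allI continuous_on_sum ballI continuous_on_mult continuous_on_const coordc)
    show "uniform_limit M f (\<lambda>p. Rop T p i) sequentially"
    proof (rule uniform_limitI)
      fix e :: real assume e: "e > 0"
      obtain m0 where m0: "\<forall>p\<in>M. (\<Sum>\<^sub>\<infinity>k\<in>{m0..}. p k) < e/2" using tight[of "e/2"] e by auto
      have "\<forall>p\<in>M. dist (f m p) (Rop T p i) < e" if "m \<ge> m0" for m
      proof
        fix p assume p: "p \<in> M"
        have "infsum p {m..} \<le> infsum p {m0..}"
          by (rule infsum_mono_neutral)
             (use that pM[OF p] in \<open>auto intro: summable_on_subset_banach[OF has_sum_imp_summable]\<close>)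
        then have "2 * infsum p {m..} < e" using m0 p by fastforce
        moreover have "\<bar>Rop T p i - f m p\<bar> \<le> 2 * infsum p {m..}"
          unfolding f_def by (rule Rop_tail[OF pM[OF p]])
        ultimately show "dist (f m p) (Rop T p i) < e" by (simp add: dist_real_def abs_minus_commute)
      qed
      then show "\<forall>\<^sub>F m in sequentially. \<forall>p\<in>M. dist (f m p) (Rop T p i) < e"
        unfolding eventually_sequentially by blast
    qed
  qed simp
qed

end



lemma conv_comb:
  fixes n :: nat and xs :: "nat \<Rightarrow> nat \<Rightarrow> real" and lam :: "nat \<Rightarrow> real" and z :: "nat \<Rightarrow> real"
  assumes conv: "\<And>p q t. p \<in> M \<Longrightarrow> q \<in> M \<Longrightarrow> 0 \<le> t \<Longrightarrow> t \<le> 1 \<Longrightarrow> (\<lambda>k. t * p k + (1 - t) * q k) \<in> M"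
    and z: "z \<in> M"
  shows "(\<forall>i<n. xs i \<in> M) \<Longrightarrow> (\<forall>i. 0 \<le> lam i) \<Longrightarrow> (\<Sum>i<n. lam i) \<le> 1 \<Longrightarrow>
         (\<lambda>k. (\<Sum>i<n. lam i * xs i k) + (1 - (\<Sum>i<n. lam i)) * z k) \<in> M"
proof (induction n arbitrary: lam)
  case 0
  then show ?case using z by simp
next
  case (Suc n)
  define a where "a = lam n"
  define S where "S = (\<Sum>i<n. lam i)"
  have S0: "0 \<le> S" using Suc.prems(2) by (simp add: S_def sum_nonneg)
  have aS: "S + a \<le> 1" using Suc.prems(3) by (simp add: S_def a_def)
  have a0: "0 \<le> a" using Suc.prems(2) by (simp add: a_def)
  have xn: "xs n \<in> M" using Suc.prems(1) by simp
  show ?case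
  proof (cases "a = 1")
    case True
    then have "S = 0" using S0 aS by linarith
    then have z0: "\<forall>i\<in>{..<n}. lam i = 0" unfolding S_def using Suc.prems(2)
      by (subst (asm) sum_nonneg_eq_0_iff) auto
    have "(\<lambda>k. (\<Sum>i<Suc n. lam i * xs i k) + (1 - (\<Sum>i<Suc n. lam i)) * z k) = xs n"
      using True z0 \<open>S = 0\<close> by (auto simp: a_def S_def)
    then show ?thesis using xn by simp
  next
    case False
    then have a1: "a < 1" using aS S0 by linarith
    define mu where "mu i = lam i / (1 - a)" for i
    have mu_nn: "\<forall>i. 0 \<le> mu i" using Suc.prems(2) a1 by (simp add: mu_def)
    have smu: "(\<Sum>i<n. mu i) = S / (1 - a)" by (simp add: mu_def S_def sum_divide_distrib)
    also have "\<dots> \<le> 1" using aS a1 by (simp add: pos_divide_le_eq)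
    finally have q: "(\<lambda>k. (\<Sum>i<n. mu i * xs i k) + (1 - (\<Sum>i<n. mu i)) * z k) \<in> M"
      using Suc.IH mu_nn Suc.prems(1) by auto
    have "(\<lambda>k. a * xs n k + (1 - a) * ((\<Sum>i<n. mu i * xs i k) + (1 - (\<Sum>i<n. mu i)) * z k)) \<in> M"
      using conv[OF xn q a0] a1 by simp
    moreover have "(\<lambda>k. a * xs n k + (1 - a) * ((\<Sum>i<n. mu i * xs i k) + (1 - (\<Sum>i<n. mu i)) * z k))
        = (\<lambda>k. (\<Sum>i<Suc n. lam i * xs i k) + (1 - (\<Sum>i<Suc n. lam i)) * z k)"
    proof
      fix k
      have e1: "(1 - a) * (\<Sum>i<n. mu i * xs i k) = (\<Sum>i<n. lam i * xs i k)"
        unfolding sum_distrib_left using a1 by (intro sum.cong) (auto simp: mu_def)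
      have e2: "(1 - a) * (\<Sum>i<n. mu i) = S" using smu a1 by simp
      have "a * xs n k + (1 - a) * ((\<Sum>i<n. mu i * xs i k) + (1 - (\<Sum>i<n. mu i)) * z k)
          = a * xs n k + (1 - a) * (\<Sum>i<n. mu i * xs i k) + ((1 - a) - (1 - a) * (\<Sum>i<n. mu i)) * z k"
        by (simp add: algebra_simps)
      also have "\<dots> = a * xs n k + (\<Sum>i<n. lam i * xs i k) + ((1 - a) - S) * z k" by (simp only: e1 e2)
      also have "\<dots> = (\<Sum>i<Suc n. lam i * xs i k) + (1 - (\<Sum>i<Suc n. lam i)) * z k"
        by (simp add: a_def S_def algebra_simps)
      finally show "a * xs n k + (1 - a) * ((\<Sum>i<n. mu i * xs i k) + (1 - (\<Sum>i<n. mu i)) * z k)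
        = (\<Sum>i<Suc n. lam i * xs i k) + (1 - (\<Sum>i<Suc n. lam i)) * z k" .
    qed
    ultimately show ?thesis by simp
  qed
qed

lemma M1_le1:
  assumes "p \<in> M1plus" and that: "finite F"
  shows "(\<Sum>k\<in>F. p k) \<le> 1"
proof -
  have nn: "\<And>k. 0 \<le> p k" and hs: "(p has_sum 1) UNIV" using assms unfolding M1plus_def by auto
  have "(\<Sum>k\<in>F. p k) \<le> infsum p UNIV"
    by (rule finite_sum_le_infsum) (use hs that nn in \<open>auto simp: has_sum_imp_summable\<close>)
  then show ?thesis using hs infsumI by fastforce
qed

lemma M_compact:
  assumes sub: "M \<subseteq> M1plus"
    and closed: "closedin (top_of_set M1plus) M"
    and tight: "\<And>\<epsilon>. \<epsilon> > 0 \<Longrightarrow> \<exists>m. \<forall>p\<in>M. (\<Sum>\<^sub>\<infinity>k\<in>{m..}. p k) < \<epsilon>"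
  shows "compact M"
proof -
  define mm where "mm j = (SOME m. \<forall>p\<in>M. (\<Sum>\<^sub>\<infinity>k\<in>{m..}. p k) < inverse (real (Suc j)))" for j
  have mm: "\<forall>p\<in>M. (\<Sum>\<^sub>\<infinity>k\<in>{mm j..}. p k) < inverse (real (Suc j))" for j
    unfolding mm_def by (rule someI_ex) (rule tight, simp)
  define Z where "Z = {p::nat\<Rightarrow>real. (\<forall>k. 0 \<le> p k) \<and> (\<forall>k. p k \<le> 1) \<and> (\<forall>m. (\<Sum>k<m. p k) \<le> 1)
      \<and> (\<forall>j. 1 - inverse (real (Suc j)) \<le> (\<Sum>k<mm j. p k))}"
  have cZ: "closed Z"
    unfolding Z_def
    by (intro closed_Collect_conj closed_Collect_all closed_Collect_le continuous_on_sum
        continuous_on_const coordc continuous_on_diff)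
  have C: "compact (PiE UNIV (\<lambda>_::nat. {0..1::real}))"
  proof -
    have "compactin (product_topology (\<lambda>_. euclidean) UNIV) (PiE UNIV (\<lambda>_::nat. {0..1::real}))"
      by (subst compactin_PiE) auto
    then show ?thesis by (simp add: euclidean_product_topology)
  qed
  have ZC: "Z \<subseteq> PiE UNIV (\<lambda>_::nat. {0..1::real})" unfolding Z_def by auto
  have cpZ: "compact Z"
    using compact_Int_closed[OF C cZ] ZC by (simp add: Int_absorb1)
  have ZM1: "Z \<subseteq> M1plus"
  proof
    fix p assume p: "p \<in> Z"
    have nn: "\<And>k. 0 \<le> p k" using p unfolding Z_def by auto
    have "(\<lambda>m. \<Sum>k<m. p k) \<longlonglongrightarrow> 1"
    proof (rule LIMSEQ_I)
      fix r :: real assume r: "0 < r"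
      obtain j where j: "inverse (real (Suc j)) < r" using reals_Archimedean r by blast
      have "norm ((\<Sum>k<m. p k) - 1) < r" if "m \<ge> mm j" for m
      proof -
        have "(\<Sum>k<mm j. p k) \<le> (\<Sum>k<m. p k)"
          by (rule sum_mono2) (use that nn in auto)
        moreover have "1 - inverse (real (Suc j)) \<le> (\<Sum>k<mm j. p k)" "(\<Sum>k<m. p k) \<le> 1"
          using p unfolding Z_def by auto
        ultimately show ?thesis using j by auto
      qed
      then show "\<exists>no. \<forall>m\<ge>no. norm ((\<Sum>k<m. p k) - 1) < r" by blast
    qed
    then have "p sums 1" by (simp add: sums_def)
    then have "(p has_sum 1) UNIV" using nn by (rule sums_nonneg_imp_has_sum)
    then show "p \<in> M1plus" using nn unfolding M1plus_def by auto
  qed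
  have MZ: "M \<subseteq> Z"
  proof
    fix p assume p: "p \<in> M"
    then have p1: "p \<in> M1plus" using sub by auto
    have nn: "\<And>k. 0 \<le> p k" and hs: "(p has_sum 1) UNIV" using p1 unfolding M1plus_def by auto
    have "p k \<le> 1" for k using M1_le1[OF p1, of "{k}"] by simp
    moreover have "(\<Sum>k<m. p k) \<le> 1" for m using M1_le1[OF p1, of "{..<m}"] by simp
    moreover have "1 - inverse (real (Suc j)) \<le> (\<Sum>k<mm j. p k)" for j
      using tail_sum[OF hs, of "mm j"] mm[of j] p by fastforce
    ultimately show "p \<in> Z" unfolding Z_def using nn by auto
  qed
  obtain T where T: "closed T" "M = M1plus \<inter> T" using closed closedin_closed by blast
  have "M = Z \<inter> T" using T MZ ZM1 by blast
  then show ?thesis using compact_Int_closed[OF cpZ T(1)] by simp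
qed



lemma approx_fix:
  fixes T :: "nat \<Rightarrow> nat \<Rightarrow> nat \<Rightarrow> nat \<Rightarrow> real" and M :: "(nat \<Rightarrow> real) set"
  assumes M_ne: "M \<noteq> {}"
    and M_convex: "\<And>p q t. p \<in> M \<Longrightarrow> q \<in> M \<Longrightarrow> 0 \<le> t \<Longrightarrow> t \<le> 1 \<Longrightarrow> (\<lambda>k. t * p k + (1 - t) * q k) \<in> M"
    and M_inv: "Rop T ` M \<subseteq> M"
    and Rc: "continuous_on M (Rop T)"
    and Mc: "compact M"
    and e: "e > 0"
  shows "\<exists>y\<in>M. (\<Sum>k<N. \<bar>Rop T y k - y k\<bar>) \<le> e"
proof -
  define R where "R = Rop T"
  define d where "d = (\<lambda>(q::nat\<Rightarrow>real) (x::nat\<Rightarrow>real). \<Sum>k<N. \<bar>q k - x k\<bar>)"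
  have dc: "continuous_on A (\<lambda>q. d q x)" for A x
    unfolding d_def by (intro continuous_on_sum continuous_on_rabs continuous_on_diff coordc continuous_on_const)
  have "\<And>x. x \<in> M \<Longrightarrow> open {q. d q x < e}"
    by (rule open_Collect_less) (auto intro: dc continuous_on_const)
  moreover have "M \<subseteq> (\<Union>x\<in>M. {q. d q x < e})"
    using e by (auto simp: d_def)
  ultimately obtain X where X: "X \<subseteq> M" "finite X" "M \<subseteq> (\<Union>x\<in>X. {q. d q x < e})"
    using compactE_image[OF Mc, of M "\<lambda>x. {q. d q x < e}"] by metis
  obtain xl where xl: "set xl = X" using finite_list[OF X(2)] by blast
  define n where "n = length xl"
  define xs where "xs i = xl ! i" for i
  have xsM: "\<forall>i<n. xs i \<in> M" using X(1) xl by (auto simp: xs_def n_def)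
  have n0: "n > 0" using M_ne X(3) xl n_def by (cases xl) auto
  have cover: "\<exists>i<n. d q (xs i) < e" if qM: "q \<in> M" for q
  proof -
    obtain x where "x \<in> X" "d q x < e" using X(3) qM by blast
    then show ?thesis using xl by (auto simp: in_set_conv_nth xs_def n_def)
  qed
  define phi where "phi i q = max 0 (e - d q (xs i))" for i q
  define Sp where "Sp q = (\<Sum>i<n. phi i q)" for q
  have phi_nn: "0 \<le> phi i q" for i q by (simp add: phi_def)
  have Sp_pos: "Sp q > 0" if qM: "q \<in> M" for q
  proof -
    obtain i where i: "i < n" "d q (xs i) < e" using cover[OF qM] by blast
    have "0 < phi i q" using i by (simp add: phi_def)
    also have "\<dots> \<le> Sp q" unfolding Sp_def by (rule member_le_sum) (use i phi_nn in auto)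
    finally show ?thesis .
  qed
  define L where "L lam = (\<lambda>k. (\<Sum>i<n. lam i * xs i k) + (1 - (\<Sum>i<n. lam i)) * xs 0 k)" for lam :: "nat \<Rightarrow> real"
  have LM: "L lam \<in> M" if "lam \<in> Kn n" for lam
    unfolding L_def
    by (rule conv_comb[OF M_convex]) (use xsM n0 that in \<open>auto simp: Kn_def\<close>)
  have Lc: "continuous_on (Kn n) L"
    unfolding L_def
    by (intro continuous_on_coordinatewise_then_product continuous_on_add continuous_on_sum
        continuous_on_mult continuous_on_diff continuous_on_const coordc)
  have RLc: "continuous_on (Kn n) (\<lambda>lam. R (L lam))"
    unfolding R_def by (rule continuous_on_compose2[OF Rc Lc]) (use LM in auto)
  have RLM: "R (L lam) \<in> M" if "lam \<in> Kn n" for lam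
    using M_inv LM[OF that] unfolding R_def by auto
  define g where "g lam = (\<lambda>i. if i < n then phi i (R (L lam)) / Sp (R (L lam)) else 0)" for lam
  have phic: "continuous_on (Kn n) (\<lambda>lam. phi i (R (L lam)))" for i
    unfolding phi_def
    by (intro continuous_on_max continuous_on_const continuous_on_diff
          continuous_on_compose2[OF dc RLc, of UNIV, simplified])
  have Spc: "continuous_on (Kn n) (\<lambda>lam. Sp (R (L lam)))"
    unfolding Sp_def by (intro continuous_on_sum phic)
  have gc: "continuous_on (Kn n) g"
    unfolding g_def
  proof (rule continuous_on_coordinatewise_then_product)
    fix i
    show "continuous_on (Kn n) (\<lambda>lam. if i < n then phi i (R (L lam)) / Sp (R (L lam)) else 0)"
    proof (cases "i < n")
      case True
      have "continuous_on (Kn n) (\<lambda>lam. phi i (R (L lam)) / Sp (R (L lam)))"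
        by (intro continuous_on_divide phic Spc) (use Sp_pos RLM in force)
      then show ?thesis using True by simp
    qed simp
  qed
  have sumg: "(\<Sum>i<n. g lam i) = 1" if "lam \<in> Kn n" for lam
  proof -
    have "(\<Sum>i<n. g lam i) = (\<Sum>i<n. phi i (R (L lam))) / Sp (R (L lam))"
      unfolding g_def by (simp add: sum_divide_distrib)
    then show ?thesis using Sp_pos[OF RLM[OF that]] by (simp add: Sp_def)
  qed
  have gK: "g ` Kn n \<subseteq> Kn n"
  proof
    fix x assume "x \<in> g ` Kn n"
    then obtain lam where lam: "lam \<in> Kn n" "x = g lam" by blast
    have "\<forall>i. 0 \<le> g lam i" unfolding g_def using phi_nn Sp_pos[OF RLM[OF lam(1)]]
      by (auto intro: divide_nonneg_pos)
    then show "x \<in> Kn n" using sumg[OF lam(1)] lam(2) unfolding Kn_def by (auto simp: g_def)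
  qed
  obtain lam where lam: "lam \<in> Kn n" "g lam = lam" using brouwer_K[OF gc gK] by blast
  define y where "y = L lam"
  define w where "w i = phi i (R y) / Sp (R y)" for i
  have yM: "y \<in> M" using LM[OF lam(1)] by (simp add: y_def)
  have Sy: "Sp (R y) > 0" unfolding y_def by (rule Sp_pos[OF RLM[OF lam(1)]])
  have lw: "lam i = w i" if iN: "i < n" for i
  proof -
    have "g lam i = lam i" using lam(2) by simp
    then show ?thesis using iN by (simp add: g_def w_def y_def)
  qed
  have sl: "(\<Sum>i<n. lam i) = 1" using sumg[OF lam(1)] lam(2) by simp
  have sw: "(\<Sum>i<n. w i) = 1" using sl lw by simp
  have w_nn: "0 \<le> w i" for i using phi_nn Sy by (simp add: w_def)
  have yk: "y k = (\<Sum>i<n. w i * xs i k)" for k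
    unfolding y_def L_def using sl lw by simp
  have wd: "w i * d (R y) (xs i) \<le> w i * e" for i
  proof (cases "phi i (R y) > 0")
    case True
    then have "d (R y) (xs i) < e" by (simp add: phi_def)
    then show ?thesis using w_nn[of i] by (simp add: mult_left_mono)
  next
    case False
    then have "phi i (R y) = 0" using phi_nn[of i "R y"] by linarith
    then show ?thesis by (simp add: w_def)
  qed
  have "(\<Sum>k<N. \<bar>R y k - y k\<bar>) = (\<Sum>k<N. \<bar>\<Sum>i<n. w i * (R y k - xs i k)\<bar>)"
  proof (rule sum.cong)
    fix k
    have "R y k - y k = (\<Sum>i<n. w i) * R y k - (\<Sum>i<n. w i * xs i k)" using sw yk by simp
    also have "\<dots> = (\<Sum>i<n. w i * (R y k - xs i k))"
      by (simp add: sum_distrib_right sum_subtractf right_diff_distrib)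
    finally show "\<bar>R y k - y k\<bar> = \<bar>\<Sum>i<n. w i * (R y k - xs i k)\<bar>" by simp
  qed simp
  also have "\<dots> \<le> (\<Sum>k<N. \<Sum>i<n. w i * \<bar>R y k - xs i k\<bar>)"
  proof (rule sum_mono)
    fix k
    have "\<bar>\<Sum>i<n. w i * (R y k - xs i k)\<bar> \<le> (\<Sum>i<n. \<bar>w i * (R y k - xs i k)\<bar>)" by (rule sum_abs)
    also have "\<dots> = (\<Sum>i<n. w i * \<bar>R y k - xs i k\<bar>)" using w_nn by (simp add: abs_mult)
    finally show "\<bar>\<Sum>i<n. w i * (R y k - xs i k)\<bar> \<le> (\<Sum>i<n. w i * \<bar>R y k - xs i k\<bar>)" .
  qed
  also have "\<dots> = (\<Sum>i<n. w i * d (R y) (xs i))"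
    unfolding d_def by (simp add: sum_distrib_left sum.swap[of _ "{..<N}"])
  also have "\<dots> \<le> (\<Sum>i<n. w i * e)" by (rule sum_mono) (rule wd)
  also have "\<dots> = e" using sw by (simp add: sum_distrib_right[symmetric])
  finally show ?thesis using yM unfolding R_def by blast
qed



theorem proposition3:
  fixes T :: "nat \<Rightarrow> nat \<Rightarrow> nat \<Rightarrow> nat \<Rightarrow> real"
    and M :: "(nat \<Rightarrow> real) set"
  assumes T_nonneg: "\<And>i j k l. 0 \<le> T i j k l"
    and T_sum: "\<And>k l. ((\<lambda>(i,j). T i j k l) has_sum 1) UNIV"
    and M_sub: "M \<subseteq> M1plus"
    and M_ne: "M \<noteq> {}"
    and M_convex: "\<And>p q t. p \<in> M \<Longrightarrow> q \<in> M \<Longrightarrow> 0 \<le> t \<Longrightarrow> t \<le> 1 \<Longrightarrow> (\<lambda>k. t * p k + (1 - t) * q k) \<in> M"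
    and M_closed: "closedin (top_of_set M1plus) M"
    and M_inv: "Rop T ` M \<subseteq> M"
    and M_tight: "\<And>\<epsilon>. \<epsilon> > 0 \<Longrightarrow> \<exists>m. \<forall>p\<in>M. (\<Sum>\<^sub>\<infinity>k\<in>{m..}. p k) < \<epsilon>"
  shows "\<exists>p\<in>M. Rop T p = p"
proof -
  have Rc: "continuous_on M (Rop T)" by (rule Rop_cont[OF T_nonneg T_sum M_sub M_tight])
  have Mc: "compact M" by (rule M_compact[OF M_sub M_closed M_tight])
  have approx: "\<exists>y\<in>M. (\<Sum>k<N. \<bar>Rop T y k - y k\<bar>) \<le> inverse (real (Suc N))" for N
  proof (rule approx_fix[where M=M and T=T])
    show "0 < inverse (real (Suc N))" by (rule positive_imp_inverse_positive) simp
  qed (fact M_ne M_convex M_inv Rc Mc)+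
  then obtain Y where Y: "\<And>N. Y N \<in> M" "\<And>N. (\<Sum>k<N. \<bar>Rop T (Y N) k - Y N k\<bar>) \<le> inverse (real (Suc N))"
    by metis
  obtain y r where y: "y \<in> M" "strict_mono r" "(Y \<circ> r) \<longlonglongrightarrow> y"
    using seq_compactE[OF compact_imp_seq_compact[OF Mc], of Y] Y(1) by metis
  have lim1: "(\<lambda>n. Y (r n)) \<longlonglongrightarrow> y" using y(3) by (simp add: o_def)
  have lim2: "(\<lambda>n. Rop T (Y (r n))) \<longlonglongrightarrow> Rop T y"
    by (rule continuous_on_tendsto_compose[OF Rc lim1 y(1)]) (simp add: Y(1))
  have coord: "isCont (\<lambda>x::nat\<Rightarrow>real. x k) z" for k z
  proof -
    have "continuous_on UNIV (\<lambda>x::nat\<Rightarrow>real. x k)" by (rule continuous_on_product_coordinates)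
    then show ?thesis using continuous_on_eq_continuous_at[OF open_UNIV, of "\<lambda>x::nat\<Rightarrow>real. x k"] by simp
  qed
  show ?thesis
  proof (rule bexI[OF _ y(1)], rule ext)
    fix k
    have a: "(\<lambda>n. \<bar>Rop T (Y (r n)) k - Y (r n) k\<bar>) \<longlonglongrightarrow> \<bar>Rop T y k - y k\<bar>"
      by (intro tendsto_rabs tendsto_diff isCont_tendsto_compose[OF coord lim2]
          isCont_tendsto_compose[OF coord lim1])
    have b: "(\<lambda>n. inverse (real (Suc n))) \<longlonglongrightarrow> 0" by (rule LIMSEQ_inverse_real_of_nat)
    have ev: "eventually (\<lambda>n. \<bar>Rop T (Y (r n)) k - Y (r n) k\<bar> \<le> inverse (real (Suc n))) sequentially"
    proof (rule eventually_sequentiallyI[of "Suc k"])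
      fix n assume n: "Suc k \<le> n"
      have rn: "n \<le> r n" using seq_suble[OF y(2)] .
      have "\<bar>Rop T (Y (r n)) k - Y (r n) k\<bar> \<le> (\<Sum>k'<r n. \<bar>Rop T (Y (r n)) k' - Y (r n) k'\<bar>)"
        by (rule member_le_sum) (use n rn in auto)
      also have "\<dots> \<le> inverse (real (Suc (r n)))" by (rule Y(2))
      also have "\<dots> \<le> inverse (real (Suc n))" using rn by (simp add: le_imp_inverse_le)
      finally show "\<bar>Rop T (Y (r n)) k - Y (r n) k\<bar> \<le> inverse (real (Suc n))" .
    qed
    have "\<bar>Rop T y k - y k\<bar> \<le> 0" by (rule tendsto_le[OF _ b a ev]) simp
    then show "Rop T y k = y k" by simp
  qed
qed



end
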